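(* Let $r=\max\{\eta_a,\eta_b\}$, $\alpha=\max\{\sigma_{\max}(U):U\in B(V_*,r)\}$, $L=6\alpha^2\max\{|\lambda_1|,|\lambda_{\max}|\}$. Let $\eta_1\in(0,\min\{1,\eta_a,\eta_b\})$, $\eta_2\in(0,\eta_1)$ and $0<\delta_b\leqslant\min\left\{\frac{\eta_1-\eta_2}{L\max\{\eta_a,\eta_b\}+|\lambda_1|\alpha(\alpha+1)\eta_2},\delta^*\right\}$. Then $$g\big(B([V_*],\eta_2)\times[0,\delta_b]\big)\subset B([V_*],\eta_1).$$
   Context: Let $\mathcal{V}^{N_g}$ be a real Hilbert space of finite dimension $N_g$ with inner product $(\cdot,\cdot)$, and let $H:\mathcal{V}^{N_g}\to\mathcal{V}^{N_g}$ be a self-adjoint linear operator with eigenvalues $\lambda_1\leqslant\cdots\leqslant\lambda_{N_g}$, $\lambda_{\max}=\lambda_{N_g}$, $\lambda_1<0$. Fix $N<N_g$ with $\lambda_N<\lambda_{N+1}$. Elements of $(\mathcal{V}^{N_g})^N$ are written $U=(u_1,\dots,u_N)$; $U^\top V=((u_i,v_j))_{i,j=1}^N$; for a real $N\times N$ matrix $A=(a_{kj})$, $UA$ has $j$-th component $\sum_k a_{kj}u_k$; $HU=(Hu_1,\dots,Hu_N)$; $\|U\|=\operatorname{tr}(U^\top U)^{1/2}$; $\sigma_{\max}(U)=\sqrt{\lambda_{\max}(U^\top U)}$. Set $\nabla E(U)=HU$. For $U$, $\mathcal{A}_U=\nabla E(U)U^\top-U\nabla E(U)^\top$ is the linear operator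 on $\mathcal{V}^{N_g}$ given by $\mathcal{A}_Uw=\sum_{i=1}^N\big(Hu_i\,(u_i,w)-u_i\,(Hu_i,w)\big)$, applied componentwise. Let $V_*$ satisfy $V_*^\top V_*=I_N$, $HV_*=V_*\operatorname{diag}(\lambda_1,\dots,\lambda_N)$. $\mathcal{O}^N$ denotes the $N\times N$ orthogonal matrices, $\operatorname{dist}([U],[V_*])=\inf_{Q\in\mathcal{O}^N}\|UQ-V_*\|$, $B(U,\eta)=\{W:\|W-U\|\leqslant\eta\}$, $B([V_*],\eta)=\{W:\operatorname{dist}([W],[V_*])\leqslant\eta\}$. Fix constants $\eta_a,\eta_b,\delta^*>0$ such that (as asserted in the paper) there is a unique function $\hat g:B(V_*,\eta_a)\times[0,\delta^*]\to B(V_*,\eta_b)$ with $\hat g(U,s)-U=-s\,\mathcal{A}_{\frac{\hat g(U,s)+U}{2}}\frac{\hat g(U,s)+U}{2}$, and a unique function $g:B([V_*],\eta_a)\times[0,\delta^*]\to B([V_*],\eta_b)$ with $g(U,s)=\hat g(U,s)-s\nabla E(\hat g(U,s))(I_N-\hat g(U,s)^\top\hat g(U,s))$, defined on $B(V_*,\eta_a)$ by this formula and extended to $B([V_*],\eta_a)$ by orthogonal invariance $g(UQ,s)=g(U,s)Q$ for $Q\in\mathcal{O}^N$. *)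

theory Defs
  imports "HOL-Analysis.Analysis"
begin

text \<open>Elements of (V^{N_g})^N are vectors 'v^'n with 'n a finite index type of cardinality N.
  The norm on 'v^'n is the l2-norm of the component norms, i.e. tr(U^T U)^(1/2).\<close>

definition gram :: "'v::real_inner^'n::finite \<Rightarrow> 'v^'n \<Rightarrow> real^'n^'n" where
  "gram U V = (\<chi> i j. inner (U$i) (V$j))"

definition rmul :: "'v::real_vector^'n::finite \<Rightarrow> real^'n^'n \<Rightarrow> 'v^'n" where
  "rmul U A = (\<chi> j. \<Sum>k\<in>UNIV. (A$k$j) *\<^sub>R U$k)"

definition opapp :: "('v \<Rightarrow> 'v) \<Rightarrow> 'v^'n::finite \<Rightarrow> 'v^'n" where
  "opapp H U = (\<chi> i. H (U$i))"

definition AU :: "('v::real_inner \<Rightarrow> 'v) \<Rightarrow> 'v^'n::finite \<Rightarrow> 'v \<Rightarrow> 'v" where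
  "AU H U w = (\<Sum>i\<in>UNIV. inner (U$i) w *\<^sub>R H (U$i) - inner (H (U$i)) w *\<^sub>R U$i)"

definition sigma_max :: "'v::real_inner^'n::finite \<Rightarrow> real" where
  "sigma_max U = sqrt (Sup {l. \<exists>x. x \<noteq> 0 \<and> gram U U *v x = l *\<^sub>R x})"

definition dist_cls :: "'v::real_inner^'n::finite \<Rightarrow> 'v^'n \<Rightarrow> real" where
  "dist_cls U V = Inf {norm (rmul U Q - V) | Q. orthogonal_matrix Q}"

end

theory Submission
  imports Defs
begin

lemma normsq_vec: "(norm (x::'a::real_normed_vector^'n::finite))^2 = (\<Sum>i\<in>UNIV. (norm (x$i))^2)"
  by (simp add: norm_vec_def L2_set_def sum_nonneg)

lemma normsq_real_vec: "(norm (x::real^'n::finite))^2 = (\<Sum>i\<in>UNIV. (x$i)^2)"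
  by (simp add: normsq_vec)

lemma norm_transpose: "norm (transpose (X::real^'n::finite^'n)) = norm X"
proof -
  have "(norm (transpose X))^2 = (norm X)^2"
    unfolding normsq_vec normsq_real_vec transpose_def
    by (simp, subst sum.swap, simp)
  then show ?thesis by (simp add: power2_eq_iff_nonneg)
qed

lemma le_from_sq: "(a::real)^2 \<le> b^2 \<Longrightarrow> 0 \<le> b \<Longrightarrow> a \<le> b"
  using power2_le_imp_le by blast

definition lm :: "'v::real_vector^'n::finite \<Rightarrow> real^'n \<Rightarrow> 'v" where
  "lm U x = (\<Sum>k\<in>UNIV. x$k *\<^sub>R U$k)"
definition tm :: "'v::real_inner^'n::finite \<Rightarrow> 'v \<Rightarrow> real^'n" where
  "tm U w = (\<chi> k. inner (U$k) w)"

lemma lm_add: "lm U (x + y) = lm U x + lm U y"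
  by (simp add: lm_def scaleR_add_left sum.distrib)
lemma lm_scale: "lm U (c *\<^sub>R x) = c *\<^sub>R lm U x"
  by (simp add: lm_def scaleR_sum_right)
lemma lm_diff: "lm U (x - y) = lm U x - lm U y"
  by (simp add: lm_def scaleR_diff_left sum_subtractf)

lemma inner_lm_tm: "inner (lm U x) w = inner x (tm U w)"
  by (simp add: lm_def tm_def inner_sum_left inner_vec_def)

lemma inner_lm_lm: "inner (lm U x) (lm U y) = inner x (gram U U *v y)"
  apply (simp add: inner_lm_tm tm_def gram_def matrix_vector_mult_def inner_vec_def lm_def inner_sum_left inner_sum_right
      sum_distrib_left)
  apply (subst sum.swap)
  apply (simp add: mult.commute mult.left_commute)
  done

lemma q_eq: "inner x (gram U U *v x) = (norm (lm U x))^2"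
  by (simp add: inner_lm_lm[symmetric] power2_norm_eq_inner)

lemma cont_q: "continuous_on S (\<lambda>x::real^'n::finite. (norm (lm (U::'v::real_normed_vector^'n) x))^2)"
  unfolding lm_def by (intro continuous_intros)

lemma lm_zero[simp]: "lm U 0 = 0"
  by (simp add: lm_def)

lemma inner_expand: "inner (a + t *\<^sub>R b) (a + t *\<^sub>R b) = inner a a + 2 * t * inner b a + t^2 * inner b b"
  for a b :: "'a::real_inner"
proof -
  have "inner (a + t *\<^sub>R b) (a + t *\<^sub>R b) = inner a a + t * inner a b + t * inner b a + t * t * inner b b"
    by (simp add: inner_add_left inner_add_right algebra_simps)
  then show ?thesis by (simp add: inner_commute[of a b] power2_eq_square)
qed

lemma quad_zero:
  fixes a c :: real
  assumes "\<And>t. t > 0 \<Longrightarrow> 2 * t * a \<le> t^2 * c" and "a \<ge> 0"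
  shows "a = 0"
proof (rule ccontr)
  assume "a \<noteq> 0"
  then have ap: "a > 0" using assms(2) by simp
  define t where "t = a / (\<bar>c\<bar> + 1)"
  have tp: "t > 0" using ap by (simp add: t_def)
  have "2 * t * a \<le> t^2 * c" using assms(1)[OF tp] .
  then have "2 * a \<le> t * c" using tp by (simp add: power2_eq_square)
  also have "t * c \<le> t * \<bar>c\<bar>" using tp by (simp add: mult_left_mono)
  also have "t * \<bar>c\<bar> < a"
  proof -
    have "t * \<bar>c\<bar> = a * (\<bar>c\<bar> / (\<bar>c\<bar> + 1))" by (simp add: t_def)
    also have "\<dots> < a * 1" using ap by (intro mult_strict_left_mono) auto
    finally show ?thesis by simp
  qed
  finally show False using ap by simp
qed

lemma rayleigh:
  fixes U :: "'v::real_inner^'n::finite"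
  obtains x0 :: "real^'n" and mu where "norm x0 = 1" "gram U U *v x0 = mu *\<^sub>R x0"
    "\<forall>x. (norm (lm U x))^2 \<le> mu * (norm x)^2" "mu \<ge> 0"
proof -
  let ?q = "\<lambda>x::real^'n. (norm (lm U x))^2"
  have ne: "sphere (0::real^'n) 1 \<noteq> {}" by simp
  obtain x0 where x0s: "x0 \<in> sphere (0::real^'n) 1" and mx: "\<forall>y\<in>sphere 0 1. ?q y \<le> ?q x0"
    using continuous_attains_sup[OF compact_sphere ne cont_q] by blast
  define mu where "mu = ?q x0"
  have n1: "norm x0 = 1" using x0s by simp
  have bnd: "?q x \<le> mu * (norm x)^2" for x
  proof (cases "x = 0")
    case True then show ?thesis by simp
  next
    case False
    then have nx: "norm x > 0" by simp
    have "(1 / norm x) *\<^sub>R x \<in> sphere 0 1" using nx by simp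
    then have "?q ((1 / norm x) *\<^sub>R x) \<le> mu" using mx by (simp add: mu_def)
    then have "(norm (lm U x) / norm x)^2 \<le> mu" by (simp add: lm_scale)
    then show ?thesis using nx by (simp add: power_divide field_simps)
  qed
  define G where "G = gram U U"
  define y where "y = G *v x0 - mu *\<^sub>R x0"
  have key: "2 * t * (norm y)^2 \<le> t^2 * (mu * (norm y)^2 - (norm (lm U y))^2)" if tp: "t > 0" for t
  proof -
    have A: "?q (x0 + t *\<^sub>R y) \<le> mu * (norm (x0 + t *\<^sub>R y))^2" by (rule bnd)
    have B: "?q (x0 + t *\<^sub>R y) = mu + 2 * t * inner y (G *v x0) + t^2 * ?q y"
    proof -
      have "?q (x0 + t *\<^sub>R y) = inner (lm U x0 + t *\<^sub>R lm U y) (lm U x0 + t *\<^sub>R lm U y)"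
        by (simp add: lm_add lm_scale power2_norm_eq_inner)
      also have "\<dots> = inner (lm U x0) (lm U x0) + 2 * t * inner (lm U y) (lm U x0) + t^2 * inner (lm U y) (lm U y)"
        by (rule inner_expand)
      also have "\<dots> = mu + 2 * t * inner y (G *v x0) + t^2 * ?q y"
        by (simp add: mu_def G_def inner_lm_lm power2_norm_eq_inner)
      finally show ?thesis .
    qed
    have C: "(norm (x0 + t *\<^sub>R y))^2 = 1 + 2 * t * inner x0 y + t^2 * (norm y)^2"
    proof -
      have "(norm (x0 + t *\<^sub>R y))^2 = inner x0 x0 + 2 * t * inner x0 y + t^2 * inner y y"
        unfolding power2_norm_eq_inner inner_expand by (simp add: inner_commute[of y x0])
      then show ?thesis using n1[unfolded norm_eq_1] by (simp add: power2_norm_eq_inner)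
    qed
    have D: "(norm y)^2 = inner y (G *v x0) - mu * inner x0 y"
    proof -
      have "(norm y)^2 = inner y (G *v x0 - mu *\<^sub>R x0)" by (metis power2_norm_eq_inner y_def)
      then show ?thesis by (simp add: inner_diff_right inner_commute)
    qed
    have "mu + 2 * t * inner y (G *v x0) + t^2 * ?q y \<le> mu * (1 + 2 * t * inner x0 y + t^2 * (norm y)^2)"
      using A B C by simp
    then have "2 * t * (inner y (G *v x0) - mu * inner x0 y) \<le> t^2 * (mu * (norm y)^2 - ?q y)"
      by (simp add: algebra_simps)
    then show ?thesis using D by simp
  qed
  have "(norm y)^2 = 0" by (rule quad_zero[OF key]) auto
  then have "y = 0" by simp
  then have eig: "gram U U *v x0 = mu *\<^sub>R x0" by (simp add: y_def G_def)
  show ?thesis using that[OF n1 eig allI[OF bnd]] by (simp add: mu_def)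
qed

lemma sigma_max_bound:
  fixes U :: "'v::real_inner^'n::finite"
  shows "0 \<le> sigma_max U" "norm (lm U x) \<le> sigma_max U * norm x"
proof -
  obtain x0 :: "real^'n" and mu where n1: "norm x0 = 1" and eig: "gram U U *v x0 = mu *\<^sub>R x0"
    and bnd0: "\<forall>x. (norm (lm U x))^2 \<le> mu * (norm x)^2" and mu0: "mu \<ge> 0"
    by (rule rayleigh[of U])
  have bnd: "(norm (lm U x))^2 \<le> mu * (norm x)^2" for x using bnd0 by blast
  let ?E = "{l. \<exists>x. x \<noteq> 0 \<and> gram U U *v x = l *\<^sub>R x}"
  have inE: "mu \<in> ?E" using n1 eig by (intro CollectI exI[of _ x0]) auto
  have le: "l \<le> mu" if "l \<in> ?E" for l
  proof -
    from that obtain x where xnz: "x \<noteq> 0" and ex: "gram U U *v x = l *\<^sub>R x" by (auto simp del: vector_scaleR_component)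
    have "l * (norm x)^2 = inner x (gram U U *v x)" using ex by (simp add: power2_norm_eq_inner)
    also have "\<dots> = (norm (lm U x))^2" by (rule q_eq)
    also have "\<dots> \<le> mu * (norm x)^2" by (rule bnd)
    finally show ?thesis using xnz by simp
  qed
  have "Sup ?E = mu" by (rule cSup_eq_maximum[OF inE le])
  then have sm: "sigma_max U = sqrt mu" by (simp add: sigma_max_def)
  show "0 \<le> sigma_max U" using sm mu0 by simp
  show "norm (lm U x) \<le> sigma_max U * norm x"
  proof (rule le_from_sq)
    show "(norm (lm U x))^2 \<le> (sigma_max U * norm x)^2"
      using bnd[of x] mu0 by (simp add: sm power_mult_distrib)
    show "0 \<le> sigma_max U * norm x" using sm mu0 by simp
  qed
qed

lemma tm_bound:
  fixes U :: "'v::real_inner^'n::finite"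
  shows "norm (tm U w) \<le> sigma_max U * norm w"
proof -
  have "(norm (tm U w))^2 = inner (lm U (tm U w)) w"
    by (simp add: inner_lm_tm power2_norm_eq_inner)
  also have "\<dots> \<le> norm (lm U (tm U w)) * norm w" by (rule Cauchy_Schwarz_ineq2[THEN order_trans[OF abs_ge_self]])
  also have "\<dots> \<le> sigma_max U * norm (tm U w) * norm w"
    by (intro mult_right_mono sigma_max_bound) auto
  finally have "norm (tm U w) * norm (tm U w) \<le> norm (tm U w) * (sigma_max U * norm w)"
    by (simp add: power2_eq_square algebra_simps)
  then show ?thesis
    by (cases "norm (tm U w) = 0") (auto intro: sigma_max_bound(1) mult_nonneg_nonneg)
qed

lemma norm_map_le:
  fixes E :: "'a::real_normed_vector^'n::finite" and T :: "'a \<Rightarrow> 'b::real_normed_vector"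
  assumes c: "0 \<le> c" and T: "\<And>v. norm (T v) \<le> c * norm v"
  shows "norm (\<chi> i. T (E$i)) \<le> c * norm E"
proof (rule le_from_sq)
  have "(norm (\<chi> i. T (E$i)))^2 = (\<Sum>i\<in>UNIV. (norm (T (E$i)))^2)" by (simp add: normsq_vec)
  also have "\<dots> \<le> (\<Sum>i\<in>UNIV. c^2 * (norm (E$i))^2)"
    by (intro sum_mono) (metis T norm_ge_zero power_mono power_mult_distrib)
  also have "\<dots> = (c * norm E)^2" by (simp add: normsq_vec power_mult_distrib sum_distrib_left)
  finally show "(norm (\<chi> i. T (E$i)))^2 \<le> (c * norm E)^2" .
  show "0 \<le> c * norm E" using c by simp
qed

lemma normsq_euclid: "(norm (v::'v::euclidean_space))^2 = (\<Sum>b\<in>Basis. (inner v b)^2)"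
  by (metis (no_types, lifting) euclidean_inner power2_eq_square power2_norm_eq_inner sum.cong)

lemma norm_lm_family:
  fixes E :: "'v::euclidean_space^'n::finite" and y :: "'n \<Rightarrow> real^'n"
  assumes c: "0 \<le> c" and Y: "\<And>z. norm (\<chi> j. inner (y j) z) \<le> c * norm z"
  shows "norm (\<chi> j. lm E (y j)) \<le> c * norm E"
proof (rule le_from_sq)
  have "(norm (\<chi> j. lm E (y j)))^2 = (\<Sum>j\<in>UNIV. \<Sum>b\<in>Basis. (inner (lm E (y j)) b)^2)"
    by (simp add: normsq_vec normsq_euclid)
  also have "\<dots> = (\<Sum>j\<in>UNIV. \<Sum>b\<in>Basis. (inner (y j) (tm E b))^2)"
    by (simp add: inner_lm_tm)
  also have "\<dots> = (\<Sum>b\<in>Basis. \<Sum>j\<in>UNIV. (inner (y j) (tm E b))^2)"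
    by (rule sum.swap)
  also have "\<dots> = (\<Sum>b\<in>Basis. (norm (\<chi> j. inner (y j) (tm E b)))^2)"
    by (simp add: normsq_real_vec)
  also have "\<dots> \<le> (\<Sum>b\<in>Basis. c^2 * (norm (tm E b))^2)"
    by (intro sum_mono) (metis Y norm_ge_zero power_mono power_mult_distrib)
  also have "\<dots> = c^2 * (\<Sum>b\<in>Basis. \<Sum>k\<in>UNIV. (inner (E$k) b)^2)"
    by (simp add: normsq_real_vec tm_def sum_distrib_left)
  also have "\<dots> = c^2 * (\<Sum>k\<in>UNIV. \<Sum>b\<in>Basis. (inner (E$k) b)^2)"
    by (subst sum.swap) simp
  also have "\<dots> = (c * norm E)^2"
    by (simp add: normsq_vec normsq_euclid power_mult_distrib)
  finally show "(norm (\<chi> j. lm E (y j)))^2 \<le> (c * norm E)^2" .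
  show "0 \<le> c * norm E" using c by simp
qed

lemma norm_tm_family:
  fixes E W :: "'v::real_inner^'n::finite"
  assumes c: "0 \<le> c" and Wb: "\<And>v. norm (tm W v) \<le> c * norm v"
  shows "norm (\<chi> j. tm E (W$j)) \<le> c * norm E"
proof -
  have "(\<chi> j. tm E (W$j)) = transpose (\<chi> k. tm W (E$k))"
    by (simp add: transpose_def tm_def inner_commute)
  then have "norm (\<chi> j. tm E (W$j)) = norm (\<chi> k. tm W (E$k))" by (simp add: norm_transpose)
  also have "\<dots> \<le> c * norm E" by (rule norm_map_le[OF c Wb])
  finally show ?thesis .
qed

lemma norm_orthonormal_sum:
  fixes b :: "nat \<Rightarrow> 'v::real_inner"
  assumes fin: "finite I" and on: "\<forall>i\<in>I. \<forall>j\<in>I. inner (b i) (b j) = (if i = j then 1 else 0)"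
  shows "(norm (\<Sum>i\<in>I. a i *\<^sub>R b i))^2 = (\<Sum>i\<in>I. (a i)^2)"
proof -
  have "(norm (\<Sum>i\<in>I. a i *\<^sub>R b i))^2 = (\<Sum>i\<in>I. \<Sum>j\<in>I. a i * a j * inner (b i) (b j))"
    by (simp add: power2_norm_eq_inner inner_sum_left inner_sum_right sum_distrib_left mult.assoc inner_commute mult.left_commute)
  also have "\<dots> = (\<Sum>i\<in>I. \<Sum>j\<in>I. if j = i then a i * a j else 0)"
    by (intro sum.cong refl) (simp add: on)
  also have "\<dots> = (\<Sum>i\<in>I. (a i)^2)"
    by (simp add: sum.delta[OF fin] power2_eq_square)
  finally show ?thesis .
qed

lemma opnorm_H:
  fixes H :: "'v::euclidean_space \<Rightarrow> 'v" and lam :: "nat \<Rightarrow> real"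
  assumes H_lin: "linear H"
    and eig_basis: "\<exists>b :: nat \<Rightarrow> 'v.
          (\<forall>i\<in>{1..DIM('v)}. \<forall>j\<in>{1..DIM('v)}. inner (b i) (b j) = (if i = j then 1 else 0))
        \<and> (\<forall>i\<in>{1..DIM('v)}. H (b i) = lam i *\<^sub>R b i)"
    and lam_sorted: "\<And>i j. 1 \<le> i \<Longrightarrow> i \<le> j \<Longrightarrow> j \<le> DIM('v) \<Longrightarrow> lam i \<le> lam j"
  shows "norm (H x) \<le> max \<bar>lam 1\<bar> \<bar>lam DIM('v)\<bar> * norm x"
proof -
  let ?I = "{1..DIM('v)}"
  let ?h = "max \<bar>lam 1\<bar> \<bar>lam DIM('v)\<bar>"
  obtain b :: "nat \<Rightarrow> 'v" where on: "\<forall>i\<in>?I. \<forall>j\<in>?I. inner (b i) (b j) = (if i = j then 1 else 0)"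
    and eb: "\<forall>i\<in>?I. H (b i) = lam i *\<^sub>R b i" using eig_basis by blast
  have inj: "inj_on b ?I"
  proof (rule inj_onI)
    fix i j assume "i \<in> ?I" "j \<in> ?I" "b i = b j"
    then have "inner (b i) (b j) = 1" using on by (metis inner_commute)
    then show "i = j" using on \<open>i \<in> ?I\<close> \<open>j \<in> ?I\<close> by (metis zero_neq_one)
  qed
  have po: "pairwise orthogonal (b ` ?I)"
    unfolding pairwise_def orthogonal_def using on by auto
  have nz: "0 \<notin> b ` ?I"
  proof
    assume "0 \<in> b ` ?I"
    then obtain i where "i \<in> ?I" "b i = 0" by auto
    then show False using on by force
  qed
  have ind: "independent (b ` ?I)" by (rule pairwise_orthogonal_independent[OF po nz])
  have cd: "card (b ` ?I) = DIM('v)" using card_image[OF inj] by simp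
  have "UNIV \<subseteq> span (b ` ?I)"
    by (rule card_ge_dim_independent) (use ind cd in auto)
  then have "x \<in> span (b ` ?I)" by blast
  then obtain u where xu: "x = (\<Sum>v\<in>b ` ?I. u v *\<^sub>R v)" by (auto simp: span_finite)
  define a where "a i = u (b i)" for i
  have xa: "x = (\<Sum>i\<in>?I. a i *\<^sub>R b i)" using xu sum.reindex[OF inj, of "\<lambda>v. u v *\<^sub>R v"] by (simp add: a_def)
  have Hx: "H x = (\<Sum>i\<in>?I. (lam i * a i) *\<^sub>R b i)"
    unfolding xa using eb by (simp add: linear_sum[OF H_lin] linear_scale[OF H_lin] mult.commute)
  have lb: "\<bar>lam i\<bar> \<le> ?h" if "i \<in> ?I" for i
    using lam_sorted[of 1 i] lam_sorted[of i "DIM('v)"] that by auto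
  have "(norm (H x))^2 = (\<Sum>i\<in>?I. (lam i * a i)^2)"
    unfolding Hx by (rule norm_orthonormal_sum[OF _ on]) simp
  also have "\<dots> \<le> (\<Sum>i\<in>?I. ?h^2 * (a i)^2)"
  proof (intro sum_mono)
    fix i assume "i \<in> ?I"
    then have "(lam i)^2 \<le> ?h^2" using lb by (metis abs_ge_zero power2_abs power_mono)
    then show "(lam i * a i)^2 \<le> ?h^2 * (a i)^2"
      by (simp add: power_mult_distrib mult_right_mono)
  qed
  also have "\<dots> = (?h * norm x)^2"
    unfolding power_mult_distrib sum_distrib_left[symmetric]
    by (subst norm_orthonormal_sum[OF _ on, of a, folded xa]) auto
  finally show ?thesis by (rule le_from_sq) simp
qed

lemma rmul_rmul: "rmul (rmul U A) B = rmul U (A ** B)"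
  unfolding rmul_def matrix_matrix_mult_def
  apply (simp add: vec_eq_iff scaleR_sum_right scaleR_sum_left sum_distrib_right)
  apply (intro allI, subst sum.swap, simp add: mult.commute)
  done

lemma rmul_id: "rmul U (mat 1) = U"
  by (simp add: rmul_def mat_def vec_eq_iff if_distrib[of "\<lambda>x. x *\<^sub>R _"] sum.delta cong: if_cong)

lemma norm_lm_le_norm:
  fixes U :: "'v::real_normed_vector^'n::finite"
  shows "norm (lm U x) \<le> norm U * norm x"
proof -
  have "norm (lm U x) \<le> (\<Sum>k\<in>UNIV. \<bar>x$k\<bar> * norm (U$k))"
    unfolding lm_def by (rule order_trans[OF norm_sum]) simp
  also have "\<dots> = inner (\<chi> k. \<bar>x$k\<bar>) (\<chi> k. norm (U$k))" by (simp add: inner_vec_def)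
  also have "\<dots> \<le> norm (\<chi> k. \<bar>x$k\<bar>) * norm (\<chi> k. norm (U$k))" by (rule norm_cauchy_schwarz)
  also have "norm (\<chi> k. \<bar>x$k\<bar>) = norm x" by (simp add: norm_vec_def L2_set_def)
  also have "norm (\<chi> k. norm (U$k)) = norm U" by (simp add: norm_vec_def L2_set_def)
  finally show ?thesis by (simp add: mult.commute)
qed

lemma sigma_max_le:
  fixes U :: "'v::real_inner^'n::finite"
  assumes c: "0 \<le> c" and b: "\<And>x. norm (lm U x) \<le> c * norm x"
  shows "sigma_max U \<le> c"
proof -
  obtain x0 :: "real^'n" and mu where n1: "norm x0 = 1" and eig: "gram U U *v x0 = mu *\<^sub>R x0"
    and bnd0: "\<forall>x. (norm (lm U x))^2 \<le> mu * (norm x)^2" and mu0: "mu \<ge> 0"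
    by (rule rayleigh[of U])
  let ?E = "{l. \<exists>x. x \<noteq> 0 \<and> gram U U *v x = l *\<^sub>R x}"
  have inE: "mu \<in> ?E" using n1 eig by (intro CollectI exI[of _ x0]) auto
  have le: "l \<le> c^2" if "l \<in> ?E" for l
  proof -
    from that obtain x where xnz: "x \<noteq> 0" and ex: "gram U U *v x = l *\<^sub>R x" by (auto simp del: vector_scaleR_component)
    have "l * (norm x)^2 = inner x (gram U U *v x)" using ex by (simp add: power2_norm_eq_inner)
    also have "\<dots> = (norm (lm U x))^2" by (rule q_eq)
    also have "\<dots> \<le> (c * norm x)^2" using b[of x] by (simp add: power_mono)
    finally show ?thesis using xnz by (simp add: power_mult_distrib)
  qed
  have "Sup ?E \<le> c^2" by (rule cSup_least) (use inE le in auto)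
  then have "sqrt (Sup ?E) \<le> sqrt (c^2)" by (rule real_sqrt_le_mono)
  then show ?thesis using c by (simp add: sigma_max_def)
qed

lemma tm_bound_gen:
  fixes U :: "'v::real_inner^'n::finite"
  assumes c: "0 \<le> c" and b: "\<And>x. norm (lm U x) \<le> c * norm x"
  shows "norm (tm U w) \<le> c * norm w"
proof -
  have "(norm (tm U w))^2 = inner (lm U (tm U w)) w"
    by (simp add: inner_lm_tm power2_norm_eq_inner)
  also have "\<dots> \<le> norm (lm U (tm U w)) * norm w" by (rule Cauchy_Schwarz_ineq2[THEN order_trans[OF abs_ge_self]])
  also have "\<dots> \<le> c * norm (tm U w) * norm w"
    by (intro mult_right_mono b) auto
  finally have "norm (tm U w) * norm (tm U w) \<le> norm (tm U w) * (c * norm w)"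
    by (simp add: power2_eq_square algebra_simps)
  then show ?thesis
    by (cases "norm (tm U w) = 0") (auto intro: mult_nonneg_nonneg c)
qed

lemma lm_orth_norm:
  assumes "gram V V = mat 1"
  shows "norm (lm V x) = norm x"
proof -
  have "(norm (lm V x))^2 = (norm x)^2"
    using q_eq[of x V] assms by (simp add: power2_norm_eq_inner)
  then show ?thesis by (simp add: power2_eq_iff_nonneg)
qed

lemma AU_inner: "inner (AU H M w) z = (\<Sum>i\<in>UNIV. inner (M$i) w * inner (H (M$i)) z - inner (H (M$i)) w * inner (M$i) z)"
  by (simp add: AU_def inner_sum_left inner_diff_left)

lemma AU_skew: "inner (AU H M w) z + inner (AU H M z) w = 0"
  unfolding AU_inner sum.distrib[symmetric]
  by (rule sum.neutral) (simp add: inner_commute algebra_simps)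

lemma pair_identity:
  fixes y1 y2 u1 u2 :: "'a::real_inner"
  shows "inner y1 y2 - inner u1 u2 = inner ((1/2) *\<^sub>R (y1 + u1)) (y2 - u2) + inner (y1 - u1) ((1/2) *\<^sub>R (y2 + u2))"
  by (simp add: inner_add_left inner_add_right inner_diff_left inner_diff_right algebra_simps inner_commute)

lemma gram_preserved:
  assumes Yeq: "Y - U = - s *\<^sub>R opapp (AU H ((1/2) *\<^sub>R (Y + U))) ((1/2) *\<^sub>R (Y + U))"
  shows "gram Y Y = gram U U"
proof -
  define M where "M = (1/2) *\<^sub>R (Y + U)"
  define A where "A = AU H M"
  have d: "Y$j - U$j = - s *\<^sub>R A (M$j)" for j
    using arg_cong[OF Yeq, of "\<lambda>v. v$j"] by (simp add: opapp_def M_def A_def)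
  have m: "(1/2) *\<^sub>R (Y$j + U$j) = M$j" for j by (simp add: M_def)
  have "inner (Y$i) (Y$j) - inner (U$i) (U$j) = 0" for i j
  proof -
    have "inner (Y$i) (Y$j) - inner (U$i) (U$j) = inner (M$i) (Y$j - U$j) + inner (Y$i - U$i) (M$j)"
      using pair_identity[of "Y$i" "Y$j" "U$i" "U$j"] by (simp only: m)
    also have "\<dots> = - s * (inner (A (M$j)) (M$i) + inner (A (M$i)) (M$j))"
      by (simp only: d inner_scaleR_left inner_scaleR_right inner_commute[of "M$i"]) (simp add: algebra_simps)
    also have "\<dots> = 0" using AU_skew[of H M "M$j" "M$i"] by (simp add: A_def)
    finally show ?thesis .
  qed
  then show ?thesis by (simp add: gram_def vec_eq_iff)
qed

lemma per_i:
  fixes m v w hm hw :: "'a::real_inner"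
  assumes "inner hm w = inner m hw" "inner v hw = l * inner v w"
  shows "inner m w *\<^sub>R hm - inner hm w *\<^sub>R m =
    inner m w *\<^sub>R (hm - l *\<^sub>R v) + inner (m - v) w *\<^sub>R (l *\<^sub>R v)
    - inner m hw *\<^sub>R (m - v) - inner (m - v) hw *\<^sub>R v"
  using assms by (simp add: inner_diff_left algebra_simps)

lemma AU_decomp:
  fixes H :: "'v::real_inner \<Rightarrow> 'v" and M Vs :: "'v^'n::finite"
  assumes H_lin: "linear H" and H_sa: "\<And>x y. inner (H x) y = inner x (H y)"
    and Vs_eig: "\<And>i. H (Vs$i) = l i *\<^sub>R Vs$i"
  shows "AU H M w = H (lm (M - Vs) (tm M w)) + H (lm Vs (tm (M - Vs) w))
      - lm (M - Vs) (tm M (H w)) - lm Vs (tm (M - Vs) (H w))"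
proof -
  have "AU H M w = (\<Sum>i\<in>UNIV. inner (M$i) w *\<^sub>R H (M$i - Vs$i) + inner (M$i - Vs$i) w *\<^sub>R H (Vs$i)
      - inner (M$i) (H w) *\<^sub>R (M$i - Vs$i) - inner (M$i - Vs$i) (H w) *\<^sub>R Vs$i)"
    unfolding AU_def
  proof (rule sum.cong[OF refl])
    fix i
    have e1: "inner (H (M$i)) w = inner (M$i) (H w)" by (rule H_sa)
    have e2: "inner (Vs$i) (H w) = l i * inner (Vs$i) w"
      using H_sa[of "Vs$i" w] Vs_eig[of i] by simp
    have hd: "H (M$i - Vs$i) = H (M$i) - l i *\<^sub>R Vs$i"
      using linear_diff[OF H_lin] Vs_eig[of i] by simp
    show "inner (M$i) w *\<^sub>R H (M$i) - inner (H (M$i)) w *\<^sub>R M$i =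
      inner (M$i) w *\<^sub>R H (M$i - Vs$i) + inner (M$i - Vs$i) w *\<^sub>R H (Vs$i)
      - inner (M$i) (H w) *\<^sub>R (M$i - Vs$i) - inner (M$i - Vs$i) (H w) *\<^sub>R Vs$i"
      unfolding hd Vs_eig[of i] by (rule per_i[OF e1 e2])
  qed
  also have "\<dots> = H (lm (M - Vs) (tm M w)) + H (lm Vs (tm (M - Vs) w))
      - lm (M - Vs) (tm M (H w)) - lm Vs (tm (M - Vs) (H w))"
    by (simp add: lm_def tm_def linear_sum[OF H_lin] linear_scale[OF H_lin] sum.distrib sum_subtractf)
  finally show ?thesis .
qed

lemma inner_tm_left: "inner (tm U w) z = inner w (lm U z)"
  by (metis inner_commute inner_lm_tm)

lemma core_bound:
  fixes H :: "'v::euclidean_space \<Rightarrow> 'v" and Vs U Y :: "'v^'n::finite"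
  assumes H_lin: "linear H" and H_sa: "\<And>x y. inner (H x) y = inner x (H y)"
    and Vs_eig: "\<And>i. H (Vs$i) = l i *\<^sub>R Vs$i" and Vs_orth: "gram Vs Vs = mat 1"
    and Hb: "\<And>x. norm (H x) \<le> h * norm x" and h0: "0 \<le> h"
    and Yeq: "Y - U = - s *\<^sub>R opapp (AU H ((1/2) *\<^sub>R (Y + U))) ((1/2) *\<^sub>R (Y + U))"
    and sM: "sigma_max ((1/2) *\<^sub>R (Y + U)) \<le> a" and sY: "sigma_max Y \<le> a" and sU: "sigma_max U \<le> a"
    and s0: "0 \<le> s"
  shows "norm (Y - s *\<^sub>R rmul (opapp H Y) (mat 1 - gram Y Y) - Vs)
    \<le> norm (U - Vs) + s * (2*h*a*(a+1) * norm ((1/2) *\<^sub>R (Y + U) - Vs) + h*a*(a+1) * norm (U - Vs))"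
proof -
  define M where "M = (1/2) *\<^sub>R (Y + U)"
  define E where "E = M - Vs"
  define e where "e = U - Vs"
  define f where "f = opapp (AU H M) M"
  define \<sigma> where "\<sigma> = sigma_max M"
  have \<sigma>0: "0 \<le> \<sigma>" by (simp add: \<sigma>_def sigma_max_bound(1))
  have \<sigma>a: "\<sigma> \<le> a" using sM by (simp add: \<sigma>_def M_def)
  have a0: "0 \<le> a" using \<sigma>0 \<sigma>a by simp
  have lmM: "norm (lm M x) \<le> \<sigma> * norm x" for x by (simp add: \<sigma>_def sigma_max_bound(2))
  have tmM: "norm (tm M w) \<le> \<sigma> * norm w" for w by (simp add: \<sigma>_def tm_bound)
  have lmV: "norm (lm Vs x) \<le> 1 * norm x" for x by (simp add: lm_orth_norm[OF Vs_orth])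
  have tmV: "norm (tm Vs w) \<le> 1 * norm w" for w by (rule tm_bound_gen[OF _ lmV]) simp
  define F1 where "F1 = (\<chi> j. H (lm E (tm M (M$j))))"
  define F2 where "F2 = (\<chi> j. H (lm Vs (tm E (M$j))))"
  define F3 where "F3 = (\<chi> j. lm E (tm M (H (M$j))))"
  define F4 where "F4 = (\<chi> j. lm Vs (tm E (H (M$j))))"
  have fdec: "f = F1 + F2 - F3 - F4"
    unfolding f_def F1_def F2_def F3_def F4_def E_def
    by (simp add: vec_eq_iff opapp_def AU_decomp[OF H_lin H_sa Vs_eig])
  have nF1: "norm F1 \<le> h * (\<sigma> * \<sigma>) * norm E"
  proof -
    have "norm F1 \<le> h * norm (\<chi> j. lm E (tm M (M$j)))"
      using norm_map_le[OF h0 Hb, of "\<chi> j. lm E (tm M (M$j))"] by (simp add: F1_def)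
    also have "norm (\<chi> j. lm E (tm M (M$j))) \<le> (\<sigma> * \<sigma>) * norm E"
    proof (rule norm_lm_family)
      show "0 \<le> \<sigma> * \<sigma>" using \<sigma>0 by simp
      fix z
      have "(\<chi> j. inner (tm M (M$j)) z) = tm M (lm M z)"
        unfolding vec_eq_iff by (simp add: inner_tm_left) (simp add: tm_def)
      also have "norm \<dots> \<le> \<sigma> * norm (lm M z)" by (rule tmM)
      also have "\<dots> \<le> \<sigma> * (\<sigma> * norm z)" by (rule mult_left_mono[OF lmM \<sigma>0])
      finally show "norm (\<chi> j. inner (tm M (M$j)) z) \<le> \<sigma> * \<sigma> * norm z" by simp
    qed
    finally show ?thesis using h0 by (simp add: mult_left_mono mult.assoc)
  qed
  have nF3: "norm F3 \<le> h * (\<sigma> * \<sigma>) * norm E"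
  proof -
    have "norm F3 \<le> (\<sigma> * h * \<sigma>) * norm E"
      unfolding F3_def
    proof (rule norm_lm_family)
      show "0 \<le> \<sigma> * h * \<sigma>" using \<sigma>0 h0 by simp
      fix z
      have "(\<chi> j. inner (tm M (H (M$j))) z) = tm M (H (lm M z))"
        unfolding vec_eq_iff by (simp add: inner_tm_left H_sa[symmetric]) (simp add: tm_def, metis H_sa inner_commute)
      also have "norm \<dots> \<le> \<sigma> * norm (H (lm M z))" by (rule tmM)
      also have "\<dots> \<le> \<sigma> * (h * norm (lm M z))" by (rule mult_left_mono[OF Hb \<sigma>0])
      also have "\<dots> \<le> \<sigma> * (h * (\<sigma> * norm z))" by (intro mult_left_mono lmM \<sigma>0 h0)
      finally show "norm (\<chi> j. inner (tm M (H (M$j))) z) \<le> \<sigma> * h * \<sigma> * norm z" by (simp add: mult.assoc)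
    qed
    then show ?thesis by (simp add: mult.commute mult.left_commute)
  qed
  have nF2: "norm F2 \<le> h * \<sigma> * norm E"
  proof -
    have "norm F2 \<le> h * norm (\<chi> j. lm Vs (tm E (M$j)))"
      using norm_map_le[OF h0 Hb, of "\<chi> j. lm Vs (tm E (M$j))"] by (simp add: F2_def)
    also have "norm (\<chi> j. lm Vs (tm E (M$j))) \<le> 1 * norm (\<chi> j. tm E (M$j))"
      using norm_map_le[of 1 "lm Vs" "\<chi> j. tm E (M$j)"] lmV by simp
    also have "norm (\<chi> j. tm E (M$j)) \<le> \<sigma> * norm E"
      by (rule norm_tm_family[OF \<sigma>0 tmM])
    finally show ?thesis using h0 by (simp add: mult_left_mono mult.assoc)
  qed
  have nF4: "norm F4 \<le> h * \<sigma> * norm E"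
  proof -
    have "norm F4 \<le> 1 * norm (\<chi> j. tm E (H (M$j)))"
      using norm_map_le[of 1 "lm Vs" "\<chi> j. tm E (H (M$j))"] lmV by (simp add: F4_def)
    also have "norm (\<chi> j. tm E (H (M$j))) = norm (\<chi> j. tm E ((opapp H M)$j))"
      by (simp add: opapp_def)
    also have "\<dots> \<le> (\<sigma> * h) * norm E"
    proof (rule norm_tm_family)
      show "0 \<le> \<sigma> * h" using \<sigma>0 h0 by simp
      fix v
      have "tm (opapp H M) v = tm M (H v)" by (simp add: tm_def opapp_def H_sa)
      also have "norm \<dots> \<le> \<sigma> * norm (H v)" by (rule tmM)
      also have "\<dots> \<le> \<sigma> * (h * norm v)" by (rule mult_left_mono[OF Hb \<sigma>0])
      finally show "norm (tm (opapp H M) v) \<le> \<sigma> * h * norm v" by (simp add: mult.assoc)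
    qed
    finally show ?thesis by (simp add: mult.commute)
  qed
  have nE: "0 \<le> norm E" by simp
  have hs: "h * \<sigma> \<le> h * a" by (rule mult_left_mono[OF \<sigma>a h0])
  have hss: "h * (\<sigma> * \<sigma>) \<le> h * (a * a)" by (intro mult_left_mono mult_mono \<sigma>a \<sigma>0 a0 h0)
  have nf: "norm f \<le> 2*h*a*(a+1) * norm E"
  proof -
    have "norm f \<le> norm F1 + norm F2 + norm F3 + norm F4"
      unfolding fdec using norm_triangle_ineq4[of "F1+F2-F3" F4] norm_triangle_ineq4[of "F1+F2" F3] norm_triangle_ineq[of F1 F2] by linarith
    also have "\<dots> \<le> 2 * (h * (\<sigma> * \<sigma>)) * norm E + 2 * (h * \<sigma>) * norm E"
      using nF1 nF2 nF3 nF4 by (simp add: algebra_simps)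
    also have "\<dots> \<le> 2 * (h * (a * a)) * norm E + 2 * (h * a) * norm E"
      by (intro add_mono mult_right_mono mult_left_mono hs hss nE) auto
    finally show ?thesis by (simp add: algebra_simps)
  qed
  define X where "X = mat 1 - gram Y Y"
  define T3 where "T3 = rmul (opapp H Y) X"
  have T3eq: "T3 = (\<chi> j. H (lm Y (transpose X $ j)))"
    by (simp add: T3_def vec_eq_iff rmul_def opapp_def lm_def transpose_def linear_sum[OF H_lin] linear_scale[OF H_lin])
  have sY0: "0 \<le> sigma_max Y" by (rule sigma_max_bound(1))
  have nT3a: "norm T3 \<le> h * (sigma_max Y * norm X)"
  proof -
    have "norm T3 \<le> h * norm (\<chi> j. lm Y (transpose X $ j))"
      using norm_map_le[OF h0 Hb, of "\<chi> j. lm Y (transpose X $ j)"] by (simp add: T3eq)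
    also have "norm (\<chi> j. lm Y (transpose X $ j)) \<le> sigma_max Y * norm (transpose X)"
      using norm_map_le[OF sY0 sigma_max_bound(2)[of Y], of "transpose X"] by simp
    finally show ?thesis using h0 by (simp add: norm_transpose mult_left_mono)
  qed
  define A1 where "A1 = (\<chi> i. tm U (e$i))"
  define A2 where "A2 = transpose (\<chi> j. tm Vs (e$j))"
  have Xeq: "X = - (A1 + A2)"
  proof -
    have "X = gram Vs Vs - gram U U" using gram_preserved[OF Yeq] Vs_orth by (simp add: X_def)
    also have "\<dots> = - (A1 + A2)"
      by (simp add: vec_eq_iff gram_def A1_def A2_def e_def tm_def transpose_def inner_diff_left inner_diff_right inner_commute)
    finally show ?thesis .
  qed
  have sU0: "0 \<le> sigma_max U" by (rule sigma_max_bound(1))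
  have nX: "norm X \<le> (sigma_max U + 1) * norm e"
  proof -
    have "norm X \<le> norm A1 + norm A2" unfolding Xeq norm_minus_cancel by (rule norm_triangle_ineq)
    also have "norm A1 \<le> sigma_max U * norm e"
      unfolding A1_def by (rule norm_map_le[OF sU0 tm_bound])
    also have "norm A2 \<le> 1 * norm e"
      unfolding A2_def norm_transpose by (rule norm_map_le[OF _ tmV]) simp
    finally show ?thesis by (simp add: algebra_simps)
  qed
  have nT3: "norm T3 \<le> h*a*(a+1) * norm e"
  proof -
    have "norm T3 \<le> h * (sigma_max Y * ((sigma_max U + 1) * norm e))"
      using nT3a nX by (meson h0 mult_left_mono order_trans sY0)
    also have "\<dots> \<le> h * (a * ((a + 1) * norm e))"
      by (intro mult_left_mono mult_mono h0 sY sU a0 sU0 order_refl add_right_mono) (use a0 sU0 in auto)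
    finally show ?thesis by (simp add: algebra_simps)
  qed
  have geq: "Y - s *\<^sub>R rmul (opapp H Y) (mat 1 - gram Y Y) - Vs = e - s *\<^sub>R f - s *\<^sub>R T3"
  proof -
    have "Y - Vs = e + (Y - U)" by (simp add: e_def)
    then show ?thesis using Yeq by (simp add: f_def M_def T3_def X_def)
  qed
  have "norm (e - s *\<^sub>R f - s *\<^sub>R T3) \<le> norm e + s * norm f + s * norm T3"
    using s0 norm_triangle_ineq4[of "e - s *\<^sub>R f" "s *\<^sub>R T3"] norm_triangle_ineq4[of e "s *\<^sub>R f"] by simp
  also have "\<dots> \<le> norm e + s * (2*h*a*(a+1) * norm E) + s * (h*a*(a+1) * norm e)"
    by (intro add_mono mult_left_mono nf nT3 s0 order_refl)
  finally show ?thesis unfolding geq by (simp add: E_def M_def e_def algebra_simps)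
qed

theorem lemma4p5:
  fixes H :: "'v::euclidean_space \<Rightarrow> 'v"
    and lam :: "nat \<Rightarrow> real"
    and Vs :: "'v^'n::finite"
    and idx :: "'n \<Rightarrow> nat"
    and ghat g :: "'v^'n \<Rightarrow> real \<Rightarrow> 'v^'n"
    and eta_a eta_b delta_star eta1 eta2 delta_b :: real
  assumes H_lin: "linear H"
    and H_sa: "\<And>x y. inner (H x) y = inner x (H y)"
    and eig_basis: "\<exists>b :: nat \<Rightarrow> 'v.
          (\<forall>i\<in>{1..DIM('v)}. \<forall>j\<in>{1..DIM('v)}. inner (b i) (b j) = (if i = j then 1 else 0))
        \<and> (\<forall>i\<in>{1..DIM('v)}. H (b i) = lam i *\<^sub>R b i)"
    and lam_sorted: "\<And>i j. 1 \<le> i \<Longrightarrow> i \<le> j \<Longrightarrow> j \<le> DIM('v) \<Longrightarrow> lam i \<le> lam j"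
    and lam1_neg: "lam 1 < 0"
    and N_lt: "CARD('n) < DIM('v)"
    and gap: "lam (CARD('n)) < lam (CARD('n) + 1)"
    and idx_bij: "bij_betw idx UNIV {1..CARD('n)}"
    and Vs_orth: "gram Vs Vs = mat 1"
    and Vs_eig: "\<And>i. H (Vs$i) = lam (idx i) *\<^sub>R Vs$i"
    and pos: "eta_a > 0" "eta_b > 0" "delta_star > 0"
    and ghat_maps: "\<And>U s. norm (U - Vs) \<le> eta_a \<Longrightarrow> s \<in> {0..delta_star} \<Longrightarrow>
          norm (ghat U s - Vs) \<le> eta_b"
    and ghat_eq: "\<And>U s. norm (U - Vs) \<le> eta_a \<Longrightarrow> s \<in> {0..delta_star} \<Longrightarrow>
          ghat U s - U = - s *\<^sub>R opapp (AU H ((1/2) *\<^sub>R (ghat U s + U))) ((1/2) *\<^sub>R (ghat U s + U))"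
    and ghat_unique: "\<And>U s W. norm (U - Vs) \<le> eta_a \<Longrightarrow> s \<in> {0..delta_star} \<Longrightarrow>
          norm (W - Vs) \<le> eta_b \<Longrightarrow>
          W - U = - s *\<^sub>R opapp (AU H ((1/2) *\<^sub>R (W + U))) ((1/2) *\<^sub>R (W + U)) \<Longrightarrow>
          W = ghat U s"
    and g_maps: "\<And>U s. dist_cls U Vs \<le> eta_a \<Longrightarrow> s \<in> {0..delta_star} \<Longrightarrow>
          dist_cls (g U s) Vs \<le> eta_b"
    and g_eq: "\<And>U s. norm (U - Vs) \<le> eta_a \<Longrightarrow> s \<in> {0..delta_star} \<Longrightarrow>
          g U s = ghat U s - s *\<^sub>R rmul (opapp H (ghat U s)) (mat 1 - gram (ghat U s) (ghat U s))"
    and g_inv: "\<And>U Q s. dist_cls U Vs \<le> eta_a \<Longrightarrow> s \<in> {0..delta_star} \<Longrightarrow>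
          orthogonal_matrix Q \<Longrightarrow> g (rmul U Q) s = rmul (g U s) Q"
    and eta1: "0 < eta1" "eta1 < min 1 (min eta_a eta_b)"
    and eta2: "0 < eta2" "eta2 < eta1"
    and delta_b: "0 < delta_b"
      "delta_b \<le> min ((eta1 - eta2) /
          ((6 * (Sup {sigma_max U | U. norm (U - Vs) \<le> max eta_a eta_b})\<^sup>2
              * max \<bar>lam 1\<bar> \<bar>lam DIM('v)\<bar>) * max eta_a eta_b
           + \<bar>lam 1\<bar> * (Sup {sigma_max U | U. norm (U - Vs) \<le> max eta_a eta_b})
              * ((Sup {sigma_max U | U. norm (U - Vs) \<le> max eta_a eta_b}) + 1) * eta2))
          delta_star"
  shows "\<forall>W s. dist_cls W Vs \<le> eta2 \<and> s \<in> {0..delta_b} \<longrightarrow> dist_cls (g W s) Vs \<le> eta1"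
proof (intro allI impI)
  fix W s
  assume asm: "dist_cls W Vs \<le> eta2 \<and> s \<in> {0..delta_b}"
  then have dW: "dist_cls W Vs \<le> eta2" and s0: "0 \<le> s" and sb: "s \<le> delta_b" by auto
  define r where "r = max eta_a eta_b"
  define S where "S = {sigma_max U | U. norm (U - Vs) \<le> r}"
  define \<alpha> where "\<alpha> = Sup S"
  define h where "h = max \<bar>lam 1\<bar> \<bar>lam DIM('v)\<bar>"
  define D where "D = (6 * \<alpha>\<^sup>2 * h) * r + \<bar>lam 1\<bar> * \<alpha> * (\<alpha> + 1) * eta2"
  have r0: "0 < r" using pos by (simp add: r_def)
  have Hb: "\<And>x. norm (H x) \<le> h * norm x"
    unfolding h_def by (rule opnorm_H[OF H_lin eig_basis lam_sorted])
  have h0: "0 \<le> h" by (simp add: h_def)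
  have bddS: "bdd_above S"
  proof (rule bdd_aboveI)
    fix y assume "y \<in> S"
    then obtain U where yU: "y = sigma_max U" and nU: "norm (U - Vs) \<le> r" by (auto simp: S_def)
    have "sigma_max U \<le> norm U" by (rule sigma_max_le[OF norm_ge_zero norm_lm_le_norm])
    also have "norm U \<le> norm Vs + norm (U - Vs)" by (rule norm_triangle_sub)
    finally show "y \<le> norm Vs + r" using yU nU by simp
  qed
  have sle: "sigma_max V \<le> \<alpha>" if "norm (V - Vs) \<le> r" for V
    unfolding \<alpha>_def by (rule cSup_upper[OF _ bddS]) (use that in \<open>auto simp: S_def\<close>)
  have sV1: "1 \<le> sigma_max Vs"
  proof -
    define x :: "real^'n" where "x = 1"
    have xnz: "norm x > 0" by (simp add: x_def vec_eq_iff)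
    have "1 * norm x = norm (lm Vs x)" by (simp add: lm_orth_norm[OF Vs_orth])
    also have "\<dots> \<le> sigma_max Vs * norm x" by (rule sigma_max_bound(2))
    finally show ?thesis using xnz by (simp add: mult_le_cancel_right)
  qed
  have \<alpha>1: "1 \<le> \<alpha>" using sle[of Vs] sV1 r0 by simp
  have Dpos: "0 < D"
  proof -
    have "0 \<le> (6 * \<alpha>\<^sup>2 * h) * r" using h0 r0 by simp
    moreover have "0 < \<bar>lam 1\<bar> * \<alpha> * (\<alpha> + 1) * eta2" using lam1_neg \<alpha>1 eta2 by (intro mult_pos_pos) auto
    ultimately show ?thesis unfolding D_def by linarith
  qed
  have dbD: "delta_b \<le> (eta1 - eta2) / D" and dbs: "delta_b \<le> delta_star"
    using delta_b(2) by (simp_all add: D_def \<alpha>_def S_def r_def h_def)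
  have sD: "s * D \<le> eta1 - eta2"
  proof -
    have "s \<le> (eta1 - eta2) / D" using sb dbD by simp
    then show ?thesis using Dpos by (simp add: le_divide_eq)
  qed
  have sds: "s \<in> {0..delta_star}" using s0 sb dbs by simp
  have key: "dist_cls (g W s) Vs \<le> eta1 + \<epsilon>" if ep: "0 < \<epsilon>" "\<epsilon> < eta1 - eta2" for \<epsilon>
  proof -
    let ?T = "{norm (rmul W Q - Vs) | Q. orthogonal_matrix Q}"
    have Tne: "?T \<noteq> {}" using orthogonal_matrix_id by blast
    have "Inf ?T < eta2 + \<epsilon>" using dW ep by (simp add: dist_cls_def)
    then obtain t where "t \<in> ?T" "t < eta2 + \<epsilon>" using cInf_lessD[OF Tne] by blast
    then obtain Q where oQ: "orthogonal_matrix Q" and nQ: "norm (rmul W Q - Vs) < eta2 + \<epsilon>" by blast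
    define U where "U = rmul W Q"
    have nU: "norm (U - Vs) \<le> eta2 + \<epsilon>" using nQ by (simp add: U_def)
    have nUa: "norm (U - Vs) \<le> eta_a" and nUr: "norm (U - Vs) \<le> r"
      using nU ep eta1 by (auto simp: r_def)
    have dU: "dist_cls U Vs \<le> eta_a"
    proof -
      have "dist_cls U Vs \<le> norm (rmul U (mat 1) - Vs)"
        unfolding dist_cls_def
        by (rule cInf_lower) (auto intro!: bdd_belowI[of _ 0] orthogonal_matrix_id)
      then show ?thesis using nUa by (simp add: rmul_id)
    qed
    have QQt: "Q ** transpose Q = mat 1" and QtQ: "transpose Q ** Q = mat 1"
      using oQ by (auto simp: orthogonal_matrix_def)
    have WU: "W = rmul U (transpose Q)" by (simp add: U_def rmul_rmul QQt rmul_id)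
    have gW: "g W s = rmul (g U s) (transpose Q)"
      unfolding WU by (rule g_inv[OF dU sds]) (simp add: oQ)
    have dg: "dist_cls (g W s) Vs \<le> norm (g U s - Vs)"
    proof -
      have "dist_cls (g W s) Vs \<le> norm (rmul (g W s) Q - Vs)"
        unfolding dist_cls_def
        by (rule cInf_lower) (auto intro!: bdd_belowI[of _ 0] oQ)
      then show ?thesis by (simp add: gW rmul_rmul QtQ rmul_id)
    qed
    define Y where "Y = ghat U s"
    have nY: "norm (Y - Vs) \<le> eta_b" unfolding Y_def by (rule ghat_maps[OF nUa sds])
    have Yeq: "Y - U = - s *\<^sub>R opapp (AU H ((1/2) *\<^sub>R (Y + U))) ((1/2) *\<^sub>R (Y + U))"
      unfolding Y_def by (rule ghat_eq[OF nUa sds])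
    have gU: "g U s = Y - s *\<^sub>R rmul (opapp H Y) (mat 1 - gram Y Y)"
      unfolding Y_def by (rule g_eq[OF nUa sds])
    have nM: "norm ((1/2) *\<^sub>R (Y + U) - Vs) \<le> r"
    proof -
      have "(1/2) *\<^sub>R (Y + U) - Vs = (1/2) *\<^sub>R ((Y - Vs) + (U - Vs))"
        by (simp add: algebra_simps scaleR_add_left[symmetric])
      then have "norm ((1/2) *\<^sub>R (Y + U) - Vs) \<le> (1/2) * (norm (Y - Vs) + norm (U - Vs))"
        using norm_triangle_ineq[of "Y - Vs" "U - Vs"] by simp
      also have "\<dots> \<le> (1/2) * (r + r)" using nY nUa by (simp add: r_def)
      finally show ?thesis by simp
    qed
    have nYr: "norm (Y - Vs) \<le> r" using nY by (simp add: r_def)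
    have cb: "norm (g U s - Vs) \<le> norm (U - Vs) + s * (2*h*\<alpha>*(\<alpha>+1) * norm ((1/2) *\<^sub>R (Y + U) - Vs) + h*\<alpha>*(\<alpha>+1) * norm (U - Vs))"
      unfolding gU
      by (rule core_bound[OF H_lin H_sa Vs_eig Vs_orth Hb h0 Yeq sle[OF nM] sle[OF nYr] sle[OF nUr] s0])
    have c0: "0 \<le> h*\<alpha>*(\<alpha>+1)" using h0 \<alpha>1 by simp
    have "2*h*\<alpha>*(\<alpha>+1) * norm ((1/2) *\<^sub>R (Y + U) - Vs) + h*\<alpha>*(\<alpha>+1) * norm (U - Vs)
        \<le> 2*(h*\<alpha>*(\<alpha>+1)) * r + (h*\<alpha>*(\<alpha>+1)) * r"
    proof -
      let ?c = "h*\<alpha>*(\<alpha>+1)"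
      let ?m = "norm ((1/2) *\<^sub>R (Y + U) - Vs)"
      have A: "?c * ?m \<le> ?c * r" by (rule mult_left_mono[OF nM c0])
      have B: "?c * norm (U - Vs) \<le> ?c * r" by (rule mult_left_mono[OF nUr c0])
      have eq: "2*h*\<alpha>*(\<alpha>+1) * ?m = 2 * (?c * ?m)" by (simp add: mult.assoc)
      show ?thesis unfolding eq using A B by linarith
    qed
    also have "\<dots> = 3 * (h * \<alpha> * (\<alpha> + 1)) * r" by simp
    also have "\<dots> \<le> 3 * (h * \<alpha> * (2 * \<alpha>)) * r"
      using \<alpha>1 h0 r0 by (intro mult_right_mono mult_left_mono) auto
    also have "\<dots> = (6 * \<alpha>\<^sup>2 * h) * r" by (simp add: power2_eq_square)
    also have "\<dots> \<le> D"
    proof -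
      have "0 \<le> \<bar>lam 1\<bar> * \<alpha> * (\<alpha> + 1) * eta2" using \<alpha>1 eta2 by simp
      then show ?thesis unfolding D_def by linarith
    qed
    finally have "s * (2*h*\<alpha>*(\<alpha>+1) * norm ((1/2) *\<^sub>R (Y + U) - Vs) + h*\<alpha>*(\<alpha>+1) * norm (U - Vs)) \<le> s * D"
      by (rule mult_left_mono[OF _ s0])
    then have "norm (g U s - Vs) \<le> (eta2 + \<epsilon>) + (eta1 - eta2)" using cb nU sD by linarith
    then show ?thesis using dg by simp
  qed
  show "dist_cls (g W s) Vs \<le> eta1"
  proof (rule ccontr)
    assume "\<not> dist_cls (g W s) Vs \<le> eta1"
    then have gt: "dist_cls (g W s) Vs > eta1" by simp
    define \<epsilon> where "\<epsilon> = min ((dist_cls (g W s) Vs - eta1) / 2) ((eta1 - eta2) / 2)"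
    have "0 < \<epsilon>" "\<epsilon> < eta1 - eta2" using gt eta2 unfolding \<epsilon>_def min_def by auto
    have "\<epsilon> \<le> (dist_cls (g W s) Vs - eta1) / 2" unfolding \<epsilon>_def by (rule min.cobounded1)
    note k = key[OF \<open>0 < \<epsilon>\<close> \<open>\<epsilon> < eta1 - eta2\<close>]
    have x1: "dist_cls (g W s) Vs - eta1 \<le> \<epsilon>" using k by linarith
    have x2: "dist_cls (g W s) Vs - eta1 \<le> (dist_cls (g W s) Vs - eta1) / 2"
      using x1 \<open>\<epsilon> \<le> (dist_cls (g W s) Vs - eta1) / 2\<close> by linarith
    show False using x2 gt by (simp add: field_simps)
  qed
qed

end
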